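(* Let $n\ge2$, $N\ge2n+1$, $\alpha_2,\dots,\alpha_n$ real, $\alpha_1=1$. Consider the closed ($k=1$) $N$-dimensional metric $ds^2=-dt^2+a(t)^2\left(\frac{dr^2}{1-r^2}+r^2d\Omega_{N-2}^2\right)$ and the pressure component of the Lovelock field equations with $p=0$, namely $$-(N-2)\left(\frac{N-3}{2}\Big(\frac{\dot a^2}{a^2}+\frac{1}{a^2}\Big)+\frac{\ddot a}{a}\right)+\sum_{i=2}^{n}\alpha_i\left[{}^{(i)}k_{11}\Big(\frac{\dot a^2}{a^2}+\frac{1}{a^2}\Big)^i+{}^{(i)}k_{12}\,\frac{\ddot a}{a}\Big(\frac{\dot a^2}{a^2}+\frac{1}{a^2}\Big)^{i-1}\right]=0 .$$ Let $C_1>0$ be a positive real root of $2-N+\sum_{i=2}^n\alpha_i\,{}^{(i)}k_{12}\,\frac{C_1^{i-1}}{i}=0$. Then $$a(t)=\frac{1}{\sqrt{C_1}}\cosh\big(\sqrt{C_1}\,t\big)$$ is a solution of this pressure-free equation.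
   Context: Dots denote $d/dt$ ($t$ cosmic time). This equation is the spatial ($p$) component of the Lovelock field equations $\sum_i\alpha_i\,{}^{(i)}\mathcal{H}^a_{\ b}=T^a_{\ b}$ for a perfect fluid in the FRW metric. Coefficients (binomial coefficients $\binom{a}{b}$, zero when $b<0$): ${}^{(i)}k_{11}=-\tfrac12(2(i-1))!\,(N-2)(N-1-2i)\binom{N-3}{2(i-1)}$, ${}^{(i)}k_{12}=-\tfrac12(2(i-1))!\left[2(N-i-1)\binom{N-2}{2(i-1)}+(N-2)(N-1-2i)\binom{N-3}{2i-3}\right]$. *)

theory Defs
  imports "HOL-Analysis.Analysis"
begin

definition binom :: "int \<Rightarrow> int \<Rightarrow> real" where
  "binom a b = (if b < 0 then 0 else (of_int a) gchoose (nat b))"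

definition lk11 :: "nat \<Rightarrow> nat \<Rightarrow> real" where
  "lk11 N i = - (1/2) * fact (2*(i-1)) * (real N - 2) * (real N - 1 - 2 * real i)
      * binom (int N - 3) (2 * (int i - 1))"

definition lk12 :: "nat \<Rightarrow> nat \<Rightarrow> real" where
  "lk12 N i = - (1/2) * fact (2*(i-1)) *
     (2 * (real N - real i - 1) * binom (int N - 2) (2 * (int i - 1))
      + (real N - 2) * (real N - 1 - 2 * real i) * binom (int N - 3) (2 * int i - 3))"

text \<open>Left-hand side of the pressure-free spatial Lovelock equation for the closed FRW
  metric (k = 1), evaluated with a, its first and second derivatives at a time.\<close>
definition pressure_lhs :: "nat \<Rightarrow> nat \<Rightarrow> (nat \<Rightarrow> real) \<Rightarrow> real \<Rightarrow> real \<Rightarrow> real \<Rightarrow> real" where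
  "pressure_lhs N n \<alpha> a a' a'' =
     (let H = a'^2 / a^2 + 1 / a^2 in
      - (real N - 2) * ((real N - 3) / 2 * H + a'' / a)
      + (\<Sum>i=2..n. \<alpha> i * (lk11 N i * H ^ i + lk12 N i * (a'' / a) * H ^ (i - 1))))"

end

theory Submission
  imports Defs
begin

lemma kid:
  assumes i2: "i \<ge> 2" and Ni: "N \<ge> 2 * i + 1"
  shows "lk11 N i + lk12 N i = (real N - 1) / (2 * real i) * lk12 N i"
proof -
  have nj: "\<And>k. nat (1 + int k) = Suc k" by simp
  define M where "M = N - 3"
  define j0 where "j0 = 2 * i - 3"
  have NM: "N = M + 3" using M_def Ni i2 by simp
  have ij: "2 * i - 2 = Suc j0" using j0_def i2 by simp
  have F1: "Suc j0 * (M choose Suc j0) = (M - j0) * (M choose j0)"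
    by (metis binomial_absorb_comp binomial_absorption)
  have F2: "(M + 1 - Suc j0) * ((M+1) choose Suc j0) = (M+1) * (M choose Suc j0)"
    by (metis binomial_absorb_comp diff_Suc_1 add.commute plus_1_eq_Suc)
  have b1: "binom (int N - 3) (2 * (int i - 1)) = real (M choose Suc j0)"
  proof -
    have "2 * (int i - 1) = int (Suc j0)" using i2 unfolding j0_def by arith
    moreover have "int N - 3 = int M" using NM by simp
    ultimately show ?thesis unfolding binom_def
      by (simp add: binomial_gbinomial[symmetric] nj)
  qed
  have b2: "binom (int N - 2) (2 * (int i - 1)) = real ((M+1) choose Suc j0)"
  proof -
    have "2 * (int i - 1) = int (Suc j0)" using i2 unfolding j0_def by arith
    moreover have "int N - 2 = int (M+1)" using NM by simp
    ultimately show ?thesis unfolding binom_def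
      by (simp add: binomial_gbinomial[symmetric] nj del: of_nat_add of_nat_Suc)
  qed
  have b3: "binom (int N - 3) (2 * int i - 3) = real (M choose j0)"
  proof -
    have "2 * int i - 3 = int j0" using j0_def i2 by linarith
    moreover have "int N - 3 = int M" using NM by simp
    ultimately show ?thesis unfolding binom_def
      by (simp add: binomial_gbinomial[symmetric] nj)
  qed
  define X where "X = real (M choose Suc j0)"
  define Y where "Y = real ((M+1) choose Suc j0)"
  define Z where "Z = real (M choose j0)"
  have j0r: "real j0 = 2 * real i - 3" using j0_def i2 by simp
  have Mr: "real M = real N - 3" using NM by simp
  have R1: "(2 * real i - 2) * X = (real N - 2 * real i) * Z"
  proof -
    have "real (Suc j0 * (M choose Suc j0)) = real ((M - j0) * (M choose j0))" using F1 by simp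
    moreover have "real (M - j0) = real N - 2 * real i" using Ni j0_def NM i2 j0r by (simp add: of_nat_diff)
    ultimately show ?thesis unfolding X_def Z_def using j0r by simp (simp add: algebra_simps)
  qed
  have R2: "(real N - 2 * real i) * Y = (real N - 2) * X"
  proof -
    have "real ((M + 1 - Suc j0) * ((M+1) choose Suc j0)) = real ((M+1) * (M choose Suc j0))"
      using F2 by simp
    moreover have "real (M + 1 - Suc j0) = real N - 2 * real i" using Ni j0_def NM i2 j0r by (simp add: of_nat_diff)
    ultimately show ?thesis unfolding X_def Y_def using Mr by simp (simp add: algebra_simps)
  qed
  have pos: "real N - 2 * real i > 0" using Ni by simp
  have key: "2 * real i * (real N - 2) * X = 2 * (real N - real i - 1) * Y + (real N - 2) * (real N - 1 - 2 * real i) * Z"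
  proof -
    have "(real N - 2 * real i) * (2 * real i * (real N - 2) * X) =
          (real N - 2 * real i) * (2 * (real N - real i - 1) * Y + (real N - 2) * (real N - 1 - 2 * real i) * Z)"
    proof -
      have "(real N - 2 * real i) * (2 * (real N - real i - 1) * Y + (real N - 2) * (real N - 1 - 2 * real i) * Z)
        = 2 * (real N - real i - 1) * ((real N - 2 * real i) * Y) + (real N - 2) * (real N - 1 - 2 * real i) * ((real N - 2 * real i) * Z)"
        by (simp add: algebra_simps)
      also have "\<dots> = 2 * (real N - real i - 1) * ((real N - 2) * X) + (real N - 2) * (real N - 1 - 2 * real i) * ((2 * real i - 2) * X)"
        using R1 R2 by simp
      also have "\<dots> = (real N - 2 * real i) * (2 * real i * (real N - 2) * X)"
        by (simp add: algebra_simps)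
      finally show ?thesis by (rule sym)
    qed
    thus ?thesis using pos by (metis mult_cancel_left less_irrefl)
  qed
  have ipos: "real i > 0" using i2 by simp
  show ?thesis
    unfolding lk11_def lk12_def b1 b2 b3 X_def[symmetric] Y_def[symmetric] Z_def[symmetric] key[symmetric]
    using ipos by (simp add: field_simps)
qed

theorem mainTheorem5:
  fixes n N :: nat and \<alpha> :: "nat \<Rightarrow> real" and C1 :: real and a :: "real \<Rightarrow> real"
  assumes "n \<ge> 2" and "N \<ge> 2 * n + 1" and "\<alpha> 1 = 1"
    and "C1 > 0"
    and "2 - real N + (\<Sum>i=2..n. \<alpha> i * lk12 N i * C1 ^ (i - 1) / real i) = 0"
    and "a = (\<lambda>t. cosh (sqrt C1 * t) / sqrt C1)"
  shows "\<forall>t. pressure_lhs N n \<alpha> (a t) (deriv a t) (deriv (deriv a) t) = 0"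
proof
  fix t
  define s where "s = sqrt C1"
  have spos: "s > 0" using assms(4) s_def by simp
  have s2: "s^2 = C1" using assms(4) s_def by simp
  have d1: "\<And>x. (a has_real_derivative sinh (s * x)) (at x)"
  proof -
    fix x
    have "((\<lambda>t. cosh (s * t) / s) has_real_derivative (sinh (s * x) * (s * 1)) / s) (at x)"
      using spos by (intro derivative_eq_intros) auto
    thus "(a has_real_derivative sinh (s * x)) (at x)" using spos assms(6) s_def by simp
  qed
  have da: "deriv a = (\<lambda>x. sinh (s * x))" using d1 DERIV_imp_deriv by blast
  have d2: "((\<lambda>x. sinh (s * x)) has_real_derivative cosh (s * t) * (s * 1)) (at t)"
    by (intro derivative_eq_intros) auto
  have dda: "deriv (deriv a) t = s * cosh (s * t)" using DERIV_imp_deriv[OF d2] da by simp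
  have at: "a t = cosh (s * t) / s" using assms(6) s_def by simp
  have cp: "cosh (s * t) > 0" by simp
  have H: "(deriv a t)^2 / (a t)^2 + 1 / (a t)^2 = C1"
  proof -
    have "(deriv a t)^2 / (a t)^2 + 1 / (a t)^2 = s^2 * ((sinh (s*t))^2 + 1) / (cosh (s*t))^2"
      unfolding da at using spos cp by (simp add: field_simps power2_eq_square)
    also have "\<dots> = s^2"
    proof -
      have "(sinh (s*t))^2 + 1 > 0" by (simp add: add_nonneg_pos)
      thus ?thesis by (simp add: cosh_square_eq)
    qed
    finally show ?thesis using s2 by simp
  qed
  have Q: "deriv (deriv a) t / a t = C1"
    unfolding dda at using spos cp s2 by (simp add: field_simps power2_eq_square)
  have sumeq: "(\<Sum>i=2..n. \<alpha> i * (lk11 N i * C1 ^ i + lk12 N i * C1 * C1 ^ (i - 1)))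
      = C1 * (real N - 1) / 2 * (\<Sum>i=2..n. \<alpha> i * lk12 N i * C1 ^ (i - 1) / real i)"
  proof -
    have "(\<Sum>i=2..n. \<alpha> i * (lk11 N i * C1 ^ i + lk12 N i * C1 * C1 ^ (i - 1)))
       = (\<Sum>i=2..n. C1 * (real N - 1) / 2 * (\<alpha> i * lk12 N i * C1 ^ (i - 1) / real i))"
    proof (rule sum.cong)
      fix i assume "i \<in> {2..n}"
      hence i2: "i \<ge> 2" and Ni: "N \<ge> 2 * i + 1" using assms(2) by auto
      have pw: "C1 ^ i = C1 * C1 ^ (i - 1)" using i2
        by (metis Suc_diff_1 less_le_trans pos2 power_Suc)
      have "\<alpha> i * (lk11 N i * C1 ^ i + lk12 N i * C1 * C1 ^ (i - 1))
          = \<alpha> i * C1 * C1 ^ (i - 1) * (lk11 N i + lk12 N i)" unfolding pw by (simp add: algebra_simps)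
      also have "\<dots> = \<alpha> i * C1 * C1 ^ (i - 1) * ((real N - 1) / (2 * real i) * lk12 N i)"
        using kid[OF i2 Ni] by simp
      finally show "\<alpha> i * (lk11 N i * C1 ^ i + lk12 N i * C1 * C1 ^ (i - 1))
          = C1 * (real N - 1) / 2 * (\<alpha> i * lk12 N i * C1 ^ (i - 1) / real i)" by simp
    qed simp
    also have "\<dots> = C1 * (real N - 1) / 2 * (\<Sum>i=2..n. \<alpha> i * lk12 N i * C1 ^ (i - 1) / real i)"
      by (simp add: sum_distrib_left)
    finally show ?thesis .
  qed
  have S: "(\<Sum>i=2..n. \<alpha> i * lk12 N i * C1 ^ (i - 1) / real i) = real N - 2" using assms(5) by simp
  show "pressure_lhs N n \<alpha> (a t) (deriv a t) (deriv (deriv a) t) = 0"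
    unfolding pressure_lhs_def Let_def H Q sumeq S by (simp add: field_simps)
qed

end
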